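(* For every graph $G$ on vertex set $[n]$, the graph $\langle G\rangle_{K_4}$ consists of a triangle-free collection of edge-disjoint cliques.
   Context: $\langle G\rangle_{K_4}$ is the closure of $G$ under the $K_4$-bootstrap process on $K_n$: repeatedly add any edge of $K_n$ which is the only missing edge of some copy of $K_4$. A collection $\mathcal{K}$ of cliques is triangle-free if there do not exist distinct vertices $u,v,w$ and cliques $A,B,C \in \mathcal{K}$ with $u \in V(A)\cap V(B)$, $v \in V(B) \cap V(C)$ and $w \in V(A) \cap V(C)$. *)

theory Defs
  imports Main
begin

definition all_edges :: "nat \<Rightarrow> nat set set" where
  "all_edges n = {{u, v} | u v. u \<in> {1..n} \<and> v \<in> {1..n} \<and> u \<noteq> v}"

definition is_graph :: "nat \<Rightarrow> nat set set \<Rightarrow> bool" where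
  "is_graph n G \<longleftrightarrow> G \<subseteq> all_edges n"

text \<open>The K4-bootstrap closure on K_n: repeatedly add an edge which is the only
  missing edge of some copy of K4 in K_n.\<close>

inductive_set k4_closure :: "nat \<Rightarrow> nat set set \<Rightarrow> nat set set"
  for n :: nat and G :: "nat set set" where
  base: "e \<in> G \<Longrightarrow> e \<in> k4_closure n G"
| step: "\<lbrakk> a \<in> {1..n}; b \<in> {1..n}; c \<in> {1..n}; d \<in> {1..n};
           a \<noteq> b; a \<noteq> c; a \<noteq> d; b \<noteq> c; b \<noteq> d; c \<noteq> d;
           {a, c} \<in> k4_closure n G; {a, d} \<in> k4_closure n G;
           {b, c} \<in> k4_closure n G; {b, d} \<in> k4_closure n G;
           {c, d} \<in> k4_closure n G \<rbrakk> \<Longrightarrow> {a, b} \<in> k4_closure n G"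

definition clique_edges :: "nat set \<Rightarrow> nat set set" where
  "clique_edges A = {{u, v} | u v. u \<in> A \<and> v \<in> A \<and> u \<noteq> v}"

definition edge_disjoint_cliques :: "nat set set \<Rightarrow> bool" where
  "edge_disjoint_cliques K \<longleftrightarrow>
     (\<forall>A\<in>K. \<forall>B\<in>K. A \<noteq> B \<longrightarrow> clique_edges A \<inter> clique_edges B = {})"

definition triangle_free_cliques :: "nat set set \<Rightarrow> bool" where
  "triangle_free_cliques K \<longleftrightarrow>
     \<not> (\<exists>u v w A B C. u \<noteq> v \<and> v \<noteq> w \<and> u \<noteq> w \<and>
          A \<in> K \<and> B \<in> K \<and> C \<in> K \<and> A \<noteq> B \<and> B \<noteq> C \<and> A \<noteq> C \<and>
          u \<in> A \<inter> B \<and> v \<in> B \<inter> C \<and> w \<in> A \<inter> C)"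

end

theory Submission
  imports Defs
begin

definition SS :: "nat set set \<Rightarrow> nat \<Rightarrow> nat \<Rightarrow> nat set" where
  "SS H a b = {a,b} \<union> {x. {a,x}\<in>H \<and> {b,x}\<in>H}"

lemma clos_edge:
  assumes "is_graph n G" "e \<in> k4_closure n G"
  shows "e \<in> all_edges n"
  using assms(2)
proof (induction rule: k4_closure.induct)
  case (base e) then show ?case using assms(1) unfolding is_graph_def by auto
next
  case (step a b c d) then show ?case unfolding all_edges_def by blast
qed

lemma clos_pair:
  assumes "is_graph n G" "{u,v} \<in> k4_closure n G"
  shows "u \<noteq> v \<and> u \<in> {1..n} \<and> v \<in> {1..n}"
proof -
  from clos_edge[OF assms] obtain x y where "{u,v} = {x,y}" "x \<in> {1..n}" "y \<in> {1..n}" "x \<noteq> y"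
    unfolding all_edges_def by blast
  then show ?thesis by (metis doubleton_eq_iff)
qed

lemma clique:
  assumes g: "is_graph n G" and ab: "{a,b} \<in> k4_closure n G"
    and x: "x \<in> SS (k4_closure n G) a b" and y: "y \<in> SS (k4_closure n G) a b" and "x \<noteq> y"
  shows "{x,y} \<in> k4_closure n G"
proof -
  let ?H = "k4_closure n G"
  have abd: "a \<noteq> b \<and> a \<in> {1..n} \<and> b \<in> {1..n}" using clos_pair[OF g ab] .
  consider "x = a" | "x = b" | "x \<noteq> a \<and> x \<noteq> b \<and> {a,x}\<in>?H \<and> {b,x}\<in>?H"
    using x unfolding SS_def by auto
  then show ?thesis
  proof cases
    case 1
    then show ?thesis using y \<open>x \<noteq> y\<close> ab unfolding SS_def by (auto simp: insert_commute)
  next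
    case 2
    then show ?thesis using y \<open>x \<noteq> y\<close> ab unfolding SS_def by (auto simp: insert_commute)
  next
    case 3
    consider "y = a" | "y = b" | "y \<noteq> a \<and> y \<noteq> b \<and> {a,y}\<in>?H \<and> {b,y}\<in>?H"
      using y unfolding SS_def by auto
    then show ?thesis
    proof cases
      case 1 then show ?thesis using 3 by (auto simp: insert_commute)
    next
      case 2 then show ?thesis using 3 by (auto simp: insert_commute)
    next
      case y3: 3
      have xr: "x \<in> {1..n}" using clos_pair[OF g, of a x] 3 by blast
      have yr: "y \<in> {1..n}" using clos_pair[OF g, of a y] y3 by blast
      have "{x,a}\<in>?H" "{x,b}\<in>?H" "{y,a}\<in>?H" "{y,b}\<in>?H"
        using 3 y3 by (auto simp: insert_commute)
      then show ?thesis
        using k4_closure.step[of x n y a b G] xr yr abd 3 y3 \<open>x \<noteq> y\<close> ab by blast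
    qed
  qed
qed

lemma SS_sub:
  assumes g: "is_graph n G" and ab: "{a,b} \<in> k4_closure n G"
    and x: "x \<in> SS (k4_closure n G) a b" and y: "y \<in> SS (k4_closure n G) a b"
  shows "SS (k4_closure n G) a b \<subseteq> SS (k4_closure n G) x y"
proof
  fix z assume z: "z \<in> SS (k4_closure n G) a b"
  show "z \<in> SS (k4_closure n G) x y"
  proof (cases "z = x \<or> z = y")
    case True then show ?thesis unfolding SS_def by auto
  next
    case False
    then have "{x,z} \<in> k4_closure n G" "{y,z} \<in> k4_closure n G"
      using clique[OF g ab x z] clique[OF g ab y z] by auto
    then show ?thesis unfolding SS_def by auto
  qed
qed

lemma SS_eq:
  assumes g: "is_graph n G" and ab: "{a,b} \<in> k4_closure n G"
    and x: "x \<in> SS (k4_closure n G) a b" and y: "y \<in> SS (k4_closure n G) a b" and "x \<noteq> y"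
  shows "SS (k4_closure n G) x y = SS (k4_closure n G) a b"
proof -
  have s1: "SS (k4_closure n G) a b \<subseteq> SS (k4_closure n G) x y" using SS_sub[OF g ab x y] .
  have xy: "{x,y} \<in> k4_closure n G" using clique[OF g ab x y \<open>x \<noteq> y\<close>] .
  have "a \<in> SS (k4_closure n G) a b" "b \<in> SS (k4_closure n G) a b" unfolding SS_def by auto
  then have "a \<in> SS (k4_closure n G) x y" "b \<in> SS (k4_closure n G) x y" using s1 by auto
  then have "SS (k4_closure n G) x y \<subseteq> SS (k4_closure n G) a b" using SS_sub[OF g xy] by blast
  then show ?thesis using s1 by blast
qed

lemma SS_range:
  assumes g: "is_graph n G" and ab: "{a,b} \<in> k4_closure n G"
  shows "SS (k4_closure n G) a b \<subseteq> {1..n}"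
  using clos_pair[OF g ab] clos_pair[OF g, of a] unfolding SS_def by blast

theorem mainTheorem18:
  fixes n :: nat and G :: "nat set set"
  assumes "is_graph n G"
  shows "\<exists>K :: nat set set.
           (\<forall>A\<in>K. A \<subseteq> {1..n} \<and> card A \<ge> 2) \<and>
           edge_disjoint_cliques K \<and>
           triangle_free_cliques K \<and>
           k4_closure n G = (\<Union>A\<in>K. clique_edges A)"
proof -
  note g = assms
  let ?H = "k4_closure n G"
  define K where "K = {SS ?H a b | a b. {a,b} \<in> ?H}"
  have P1: "\<forall>A\<in>K. A \<subseteq> {1..n} \<and> card A \<ge> 2"
  proof
    fix A assume "A \<in> K"
    then obtain a b where A: "A = SS ?H a b" and ab: "{a,b} \<in> ?H" unfolding K_def by blast
    have r: "A \<subseteq> {1..n}" using SS_range[OF g ab] A by simp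
    have "{a,b} \<subseteq> A" using A unfolding SS_def by auto
    moreover have "card {a,b} = 2" using clos_pair[OF g ab] by simp
    moreover have "finite A" using r finite_subset by blast
    ultimately have "card A \<ge> 2" by (metis card_mono)
    then show "A \<subseteq> {1..n} \<and> card A \<ge> 2" using r by simp
  qed
  have key: "\<And>A u v. A \<in> K \<Longrightarrow> u \<in> A \<Longrightarrow> v \<in> A \<Longrightarrow> u \<noteq> v \<Longrightarrow> A = SS ?H u v \<and> {u,v} \<in> ?H"
  proof -
    fix A u v assume "A \<in> K" "u \<in> A" "v \<in> A" "u \<noteq> v"
    then obtain a b where A: "A = SS ?H a b" and ab: "{a,b} \<in> ?H" unfolding K_def by blast
    show "A = SS ?H u v \<and> {u,v} \<in> ?H"
      using SS_eq[OF g ab, of u v] clique[OF g ab, of u v] A \<open>u \<in> A\<close> \<open>v \<in> A\<close> \<open>u \<noteq> v\<close> by auto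
  qed
  have P2: "edge_disjoint_cliques K"
    unfolding edge_disjoint_cliques_def
  proof (intro ballI impI)
    fix A B assume A: "A \<in> K" and B: "B \<in> K" and ne: "A \<noteq> B"
    show "clique_edges A \<inter> clique_edges B = {}"
    proof (rule ccontr)
      assume "clique_edges A \<inter> clique_edges B \<noteq> {}"
      then obtain u v u' v' where e: "{u,v} = {u',v'}" "u \<in> A" "v \<in> A" "u \<noteq> v"
        "u' \<in> B" "v' \<in> B" unfolding clique_edges_def by blast
      then have "u \<in> B" "v \<in> B" by (auto simp: doubleton_eq_iff)
      then show False using key[OF A e(2,3,4)] key[OF B _ _ e(4)] ne by metis
    qed
  qed
  have P3: "triangle_free_cliques K"
    unfolding triangle_free_cliques_def
  proof
    assume "\<exists>u v w A B C. u \<noteq> v \<and> v \<noteq> w \<and> u \<noteq> w \<and>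
          A \<in> K \<and> B \<in> K \<and> C \<in> K \<and> A \<noteq> B \<and> B \<noteq> C \<and> A \<noteq> C \<and>
          u \<in> A \<inter> B \<and> v \<in> B \<inter> C \<and> w \<in> A \<inter> C"
    then obtain u v w A B C where h: "u \<noteq> v" "v \<noteq> w" "u \<noteq> w"
          "A \<in> K" "B \<in> K" "C \<in> K" "A \<noteq> B"
          "u \<in> A" "u \<in> B" "v \<in> B" "v \<in> C" "w \<in> A" "w \<in> C" by blast
    have B: "B = SS ?H u v" using key[OF h(5,9,10,1)] by simp
    have A: "A = SS ?H u w" and uw: "{u,w} \<in> ?H" using key[OF h(4,8,12,3)] by auto
    have vw: "{v,w} \<in> ?H" using key[OF h(6,11,13,2)] by simp
    have "w \<in> B" using B uw vw unfolding SS_def by auto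
    then have "B = SS ?H u w" using key[OF h(5,9) _ h(3)] by simp
    then show False using A h(7) by simp
  qed
  have P4: "?H = (\<Union>A\<in>K. clique_edges A)"
  proof
    show "?H \<subseteq> (\<Union>A\<in>K. clique_edges A)"
    proof
      fix e assume e: "e \<in> ?H"
      then obtain a b where eab: "e = {a,b}" "a \<noteq> b"
        using clos_edge[OF g e] unfolding all_edges_def by blast
      then have "SS ?H a b \<in> K" using e unfolding K_def by blast
      moreover have "e \<in> clique_edges (SS ?H a b)"
        using eab unfolding clique_edges_def SS_def by blast
      ultimately show "e \<in> (\<Union>A\<in>K. clique_edges A)" by blast
    qed
  next
    show "(\<Union>A\<in>K. clique_edges A) \<subseteq> ?H"
    proof
      fix e assume "e \<in> (\<Union>A\<in>K. clique_edges A)"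
      then obtain A u v where "A \<in> K" "e = {u,v}" "u \<in> A" "v \<in> A" "u \<noteq> v"
        unfolding clique_edges_def by blast
      then show "e \<in> ?H" using key by blast
    qed
  qed
  show ?thesis using P1 P2 P3 P4 by blast
qed

end
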